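(* Let $G=(V,E)$ be a simple undirected graph and let $i\in V$ have degree $\delta$. Let $S$ be the induced star returned by the Simple Greedy algorithm (described in the context) started at $i$. Then Simple Greedy has approximation ratio $O(\delta)$: the star degree centrality $\mathcal{C}^s(i)$ satisfies $\mathcal{C}^s(i)/|N(S)| = O(\delta)$.
   Context: For $S\subseteq V$, $N(S)=\{j\in V\setminus S : (a,j)\in E \text{ for some } a\in S\}$ and $N[j]=N(\{j\})\cup\{j\}$. A set $S$ forms an induced star if $G[S]$ has exactly one node of degree $|S|-1$ (the center) and $|S|-1$ nodes of degree $1$. The star degree centrality of $i$ is $\mathcal{C}^s(i)=\max\{|N(S)| : S\subseteq V \text{ forms an induced star centered at } i\}$. Define $f_1(S,k)=|N(S\cup\{k\})|-|N(S)|$. Simple Greedy on input $i$: set $candidates\leftarrow N(i)$, $S\leftarrow\{i\}$. While $candidates\neq\emptyset$: remove from $candidates$ every $k$ with $f_1(S,k)\leq 0$; if $candidates\neq\emptyset$, pick $j\in\arg\max_{k\in candidates} f_1(S,k)$, set $S\leftarrow S\cup\{j\}$ and $candidates\leftarrow candidates\setminus N[j]$. Return $S$. *)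

theory Defs
  imports Complex_Main
begin

definition simple_graph :: "'a set \<Rightarrow> ('a \<times> 'a) set \<Rightarrow> bool" where
  "simple_graph V E \<longleftrightarrow> finite V \<and> E \<subseteq> V \<times> V \<and> sym E \<and> irrefl E"

definition nbhd :: "'a set \<Rightarrow> ('a \<times> 'a) set \<Rightarrow> 'a set \<Rightarrow> 'a set" where
  "nbhd V E S = {j \<in> V - S. \<exists>a\<in>S. (a, j) \<in> E}"

definition closed_nbhd :: "'a set \<Rightarrow> ('a \<times> 'a) set \<Rightarrow> 'a \<Rightarrow> 'a set" where
  "closed_nbhd V E j = nbhd V E {j} \<union> {j}"

definition induced_star :: "'a set \<Rightarrow> ('a \<times> 'a) set \<Rightarrow> 'a set \<Rightarrow> 'a \<Rightarrow> bool" where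
  "induced_star V E S c \<longleftrightarrow> S \<subseteq> V \<and> c \<in> S \<and>
     (\<forall>a \<in> S - {c}. (c, a) \<in> E) \<and> (\<forall>a \<in> S - {c}. \<forall>b \<in> S - {c}. (a, b) \<notin> E)"

definition star_centrality :: "'a set \<Rightarrow> ('a \<times> 'a) set \<Rightarrow> 'a \<Rightarrow> nat" where
  "star_centrality V E i = Max {card (nbhd V E S) | S. induced_star V E S i}"

definition f1 :: "'a set \<Rightarrow> ('a \<times> 'a) set \<Rightarrow> 'a set \<Rightarrow> 'a \<Rightarrow> int" where
  "f1 V E S k = int (card (nbhd V E (S \<union> {k}))) - int (card (nbhd V E S))"

text \<open>Reachable states (S, candidates) of Simple Greedy started at i. Ties in the argmax are
  resolved arbitrarily (nondeterministically).\<close>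
inductive greedy_reach :: "'a set \<Rightarrow> ('a \<times> 'a) set \<Rightarrow> 'a \<Rightarrow> 'a set \<times> 'a set \<Rightarrow> bool"
  for V E i where
  init: "greedy_reach V E i ({i}, nbhd V E {i})"
| stop: "\<lbrakk>greedy_reach V E i (S, C); C \<noteq> {}; {k \<in> C. f1 V E S k > 0} = {}\<rbrakk>
          \<Longrightarrow> greedy_reach V E i (S, {})"
| pick: "\<lbrakk>greedy_reach V E i (S, C); C \<noteq> {}; j \<in> {k \<in> C. f1 V E S k > 0};
          \<forall>k \<in> {k \<in> C. f1 V E S k > 0}. f1 V E S k \<le> f1 V E S j\<rbrakk>
          \<Longrightarrow> greedy_reach V E i (insert j S, {k \<in> C. f1 V E S k > 0} - closed_nbhd V E j)"

definition greedy_output :: "'a set \<Rightarrow> ('a \<times> 'a) set \<Rightarrow> 'a \<Rightarrow> 'a set \<Rightarrow> bool" where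
  "greedy_output V E i S \<longleftrightarrow> greedy_reach V E i (S, {})"

end

theory Submission
  imports Defs
begin

definition gval :: "'a set \<Rightarrow> ('a \<times> 'a) set \<Rightarrow> 'a \<Rightarrow> 'a \<Rightarrow> nat" where
  "gval V E i k = card (nbhd V E {k} - closed_nbhd V E i)"

definition Mval :: "'a set \<Rightarrow> ('a \<times> 'a) set \<Rightarrow> 'a \<Rightarrow> nat" where
  "Mval V E i = Max (insert 0 (gval V E i ` nbhd V E {i}))"

lemma fin_nbhd: "simple_graph V E \<Longrightarrow> finite (nbhd V E S)"
  unfolding simple_graph_def nbhd_def by auto

lemma L1:
  assumes sg: "simple_graph V E" and k: "k \<in> nbhd V E {i}"
  shows "f1 V E {i} k = int (gval V E i k) - 1"
proof -
  have fin: "finite V" using sg simple_graph_def by auto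
  have eq: "nbhd V E ({i} \<union> {k}) = (nbhd V E {i} - {k}) \<union> (nbhd V E {k} - closed_nbhd V E i)"
    using k unfolding nbhd_def closed_nbhd_def by auto
  have disj: "(nbhd V E {i} - {k}) \<inter> (nbhd V E {k} - closed_nbhd V E i) = {}"
    unfolding closed_nbhd_def by auto
  have f2: "finite (nbhd V E {k} - closed_nbhd V E i)" using fin_nbhd[OF sg] by auto
  have "card (nbhd V E ({i} \<union> {k})) = card (nbhd V E {i} - {k}) + gval V E i k"
    unfolding eq gval_def using card_Un_disjoint[OF _ f2 disj] fin_nbhd[OF sg] by auto
  moreover have "card (nbhd V E {i} - {k}) = card (nbhd V E {i}) - 1"
    using k fin_nbhd[OF sg] by auto
  moreover have "card (nbhd V E {i}) \<ge> 1" using k fin_nbhd[OF sg]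
    by (metis One_nat_def Suc_leI card_gt_0_iff empty_iff)
  ultimately show ?thesis unfolding f1_def by auto
qed

lemma L2:
  assumes sg: "simple_graph V E" and M: "2 \<le> Mval V E i"
  shows "\<exists>k\<in>nbhd V E {i}. gval V E i k = Mval V E i"
proof -
  have "Mval V E i \<in> insert 0 (gval V E i ` nbhd V E {i})"
    unfolding Mval_def by (rule Max_in) (use fin_nbhd[OF sg] in auto)
  then show ?thesis using M by auto
qed

lemma gle: "simple_graph V E \<Longrightarrow> k \<in> nbhd V E {i} \<Longrightarrow> gval V E i k \<le> Mval V E i"
  unfolding Mval_def by (rule Max_ge) (use fin_nbhd in auto)

lemma inv:
  assumes "greedy_reach V E i st" and sg: "simple_graph V E"
  shows "card (nbhd V E {i}) \<le> card (nbhd V E (fst st)) \<and>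
    (2 \<le> Mval V E i \<longrightarrow> st = ({i}, nbhd V E {i}) \<or>
      card (nbhd V E {i}) + Mval V E i - 1 \<le> card (nbhd V E (fst st)))"
  using assms(1)
proof induction
  case init
  then show ?case by simp
next
  case (stop S C)
  show ?case
  proof (cases "2 \<le> Mval V E i \<and> (S, C) = ({i}, nbhd V E {i})")
    case True
    then obtain k where k: "k \<in> nbhd V E {i}" "gval V E i k = Mval V E i" using L2[OF sg] by blast
    have "f1 V E S k > 0" using True L1[OF sg k(1)] k(2) by auto
    then show ?thesis using stop.hyps(3) True k by auto
  next
    case False
    then show ?thesis using stop.IH by auto
  qed
next
  case (pick S C j)
  have inc: "card (nbhd V E (insert j S)) > card (nbhd V E S)"
    using pick.hyps(3) unfolding f1_def by auto
  have "2 \<le> Mval V E i \<longrightarrow> card (nbhd V E {i}) + Mval V E i - 1 \<le> card (nbhd V E (insert j S))"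
  proof
    assume M: "2 \<le> Mval V E i"
    show "card (nbhd V E {i}) + Mval V E i - 1 \<le> card (nbhd V E (insert j S))"
    proof (cases "(S, C) = ({i}, nbhd V E {i})")
      case True
      then obtain k where k: "k \<in> nbhd V E {i}" "gval V E i k = Mval V E i" using L2[OF sg M] by blast
      have fk: "f1 V E S k > 0" using True L1[OF sg k(1)] k(2) M by auto
      have "f1 V E S k \<le> f1 V E S j" using pick.hyps(4) fk k True by auto
      then have "int (card (nbhd V E {i})) + int (Mval V E i) - 1 \<le> int (card (nbhd V E (insert j S)))"
        using True L1[OF sg k(1)] k(2) unfolding f1_def by auto
      then show ?thesis by linarith
    next
      case False
      then show ?thesis using pick.IH M inc by auto
    qed
  qed
  moreover have "card (nbhd V E {i}) \<le> card (nbhd V E (insert j S))"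
    using pick.IH inc by simp
  ultimately show ?case by simp
qed

lemma upper:
  assumes sg: "simple_graph V E" and st: "induced_star V E T i"
  shows "card (nbhd V E T) \<le> card (nbhd V E {i}) * (1 + Mval V E i)"
proof -
  have fin: "finite V" using sg simple_graph_def by auto
  have Tsub: "T - {i} \<subseteq> nbhd V E {i}" using st sg unfolding induced_star_def nbhd_def simple_graph_def irrefl_def
    by auto
  have sub: "nbhd V E T \<subseteq> nbhd V E {i} \<union> (\<Union>k\<in>T - {i}. nbhd V E {k} - closed_nbhd V E i)"
    using st unfolding nbhd_def closed_nbhd_def induced_star_def by auto
  have finT: "finite (T - {i})" using Tsub fin_nbhd[OF sg] finite_subset by blast
  have "card (nbhd V E T) \<le> card (nbhd V E {i} \<union> (\<Union>k\<in>T - {i}. nbhd V E {k} - closed_nbhd V E i))"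
    by (rule card_mono) (use fin_nbhd[OF sg] finT sub in auto)
  also have "\<dots> \<le> card (nbhd V E {i}) + card (\<Union>k\<in>T - {i}. nbhd V E {k} - closed_nbhd V E i)"
    by (rule card_Un_le)
  also have "card (\<Union>k\<in>T - {i}. nbhd V E {k} - closed_nbhd V E i) \<le> (\<Sum>k\<in>T - {i}. gval V E i k)"
    unfolding gval_def by (rule card_UN_le[OF finT])
  also have "(\<Sum>k\<in>T - {i}. gval V E i k) \<le> (\<Sum>k\<in>T - {i}. Mval V E i)"
    by (rule sum_mono) (use gle[OF sg] Tsub in auto)
  also have "\<dots> = card (T - {i}) * Mval V E i" by simp
  also have "\<dots> \<le> card (nbhd V E {i}) * Mval V E i"
    using card_mono[OF fin_nbhd[OF sg] Tsub] by simp
  finally show ?thesis by (simp add: algebra_simps)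
qed

lemma main:
  assumes sg: "simple_graph V E" and i: "i \<in> V" and out: "greedy_output V E i S"
  shows "star_centrality V E i \<le> 2 * card (nbhd V E {i}) * card (nbhd V E S)"
proof -
  have fin: "finite V" using sg simple_graph_def by auto
  let ?A = "{card (nbhd V E T) | T. induced_star V E T i}"
  have "?A \<subseteq> (\<lambda>T. card (nbhd V E T)) ` Pow V" unfolding induced_star_def by auto
  then have finA: "finite ?A" using fin by (meson finite_Pow_iff finite_imageI finite_subset)
  have "induced_star V E {i} i" using i unfolding induced_star_def by auto
  then have neA: "?A \<noteq> {}" by blast
  obtain T where T: "induced_star V E T i" "star_centrality V E i = card (nbhd V E T)"
    using Max_in[OF finA neA] unfolding star_centrality_def by auto
  define d where "d = card (nbhd V E {i})"
  define M where "M = Mval V E i"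
  define n where "n = card (nbhd V E S)"
  have up: "star_centrality V E i \<le> d * (1 + M)" using upper[OF sg T(1)] T(2) d_def M_def by simp
  have iv: "d \<le> n \<and> (2 \<le> M \<longrightarrow> (S, {}) = ({i}, nbhd V E {i}) \<or> d + M - 1 \<le> n)"
    using inv[OF out[unfolded greedy_output_def] sg] d_def M_def n_def by simp
  show ?thesis
  proof (cases "d = 0")
    case True then show ?thesis using up by simp
  next
    case False
    have "1 + M \<le> 2 * n"
    proof (cases "2 \<le> M")
      case True
      have "nbhd V E {i} \<noteq> {}" using False d_def by auto
      then have "d + M - 1 \<le> n" using iv True by auto
      then show ?thesis using False True by linarith
    next
      case False
      then show ?thesis using iv \<open>d \<noteq> 0\<close> by linarith
    qed
    then have "d * (1 + M) \<le> d * (2 * n)" by (rule mult_le_mono2)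
    moreover have "d * (2 * n) = 2 * d * n" by simp
    ultimately show ?thesis using up unfolding d_def n_def by linarith
  qed
qed

theorem theorem3:
  shows "\<exists>c::real. \<forall>(V::nat set) E i S.
           simple_graph V E \<and> i \<in> V \<and> greedy_output V E i S \<longrightarrow>
           real (star_centrality V E i) \<le> c * real (card (nbhd V E {i})) * real (card (nbhd V E S))"
proof (rule exI[of _ 2], intro allI impI)
  fix V :: "nat set" and E i S
  assume h: "simple_graph V E \<and> i \<in> V \<and> greedy_output V E i S"
  have m: "star_centrality V E i \<le> 2 * card (nbhd V E {i}) * card (nbhd V E S)"
    using main[of V E i S] h by simp
  have "real (star_centrality V E i) \<le> real (2 * card (nbhd V E {i}) * card (nbhd V E S))"
    using m by (simp only: of_nat_le_iff)
  then show "real (star_centrality V E i) \<le> 2 * real (card (nbhd V E {i})) * real (card (nbhd V E S))"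
    by (simp only: of_nat_mult of_nat_numeral)
qed

end
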